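(* Let $a>0$. If either ($b\ge a+\frac12$ and $c\ge 2a$) or ($b\ge 2a$ and $c\ge a+\frac12$), subject to the condition $b+c>3a+\frac12$, then $(a,b,c)\in\mathcal{P}_{1,2}$. Moreover: (i) $(a,b,2a)\in\mathcal{P}_{1,2}$ if and only if $b>a+\frac12$, and for every $\delta>0$ and $x>0$, $${}_1F_2\left(a\,;a+\tfrac12+\delta,\,2a\,;-\tfrac{x^2}{4}\right)=\frac{2}{B\left(\delta,a+\frac12\right)}\int_0^1\mathbb{J}_{a-\frac12}^2\left(\frac{xt}{2}\right)(1-t^2)^{\delta-1}t^{2a}\,dt>0.$$ (ii) $(a,a+\frac12,c)\in\mathcal{P}_{1,2}$ if and only if $c>2a$, and for every $\epsilon>0$ and $x>0$, $${}_1F_2\left(a\,;a+\tfrac12,\,2a+\epsilon\,;-\tfrac{x^2}{4}\right)=\frac{2}{B(\epsilon,2a)}\int_0^1\mathbb{J}_{a-\frac12}^2\left(\frac{xt}{2}\right)(1-t^2)^{\epsilon-1}t^{4a-1}\,dt>0.$$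
   Context: For $a,b,c>0$, ${}_1F_2\left(a\,;b,c\,;-\frac{x^2}{4}\right)=\sum_{k=0}^\infty \frac{(a)_k}{k!\,(b)_k(c)_k}\left(-\frac{x^2}{4}\right)^k$, where $(\alpha)_k=\Gamma(\alpha+k)/\Gamma(\alpha)$. $\mathcal{P}_{1,2}$ denotes the set of all triples $(a,b,c)$ of positive reals such that this function is $>0$ for all $x>0$. For $\alpha>-1$, $\mathbb{J}_\alpha(x)={}_0F_1\left(\alpha+1\,;-\frac{x^2}{4}\right)=\Gamma(\alpha+1)(x/2)^{-\alpha}J_\alpha(x)$, with $J_\alpha$ the Bessel function of the first kind. $B$ denotes Euler's beta function. *)

theory Defs
  imports "HOL-Analysis.Analysis"
begin

definition hyp1F2 :: "real \<Rightarrow> real \<Rightarrow> real \<Rightarrow> real \<Rightarrow> real" where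
  "hyp1F2 a b c x =
     (\<Sum>k. pochhammer a k / (fact k * pochhammer b k * pochhammer c k) * (- (x^2) / 4) ^ k)"

text \<open>Normalized Bessel function: J_alpha(x) = 0F1(alpha+1; -x^2/4)
  = Gamma(alpha+1) (x/2)^(-alpha) J_alpha(x).\<close>
definition nBesselJ :: "real \<Rightarrow> real \<Rightarrow> real" where
  "nBesselJ \<alpha> x = (\<Sum>k. (- (x^2) / 4) ^ k / (fact k * pochhammer (\<alpha> + 1) k))"

definition P12 :: "(real \<times> real \<times> real) set" where
  "P12 = {(a, b, c). a > 0 \<and> b > 0 \<and> c > 0 \<and> (\<forall>x>0. hyp1F2 a b c x > 0)}"

end

theory Submission
  imports Defs "HOL-Real_Asymp.Real_Asymp"
begin


definition coef :: "real \<Rightarrow> real \<Rightarrow> real \<Rightarrow> nat \<Rightarrow> real" where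
  "coef a b c k = pochhammer a k / (fact k * pochhammer b k * pochhammer c k)"

lemma hyp_def2: "hyp1F2 a b c x = (\<Sum>k. coef a b c k * (-(x^2)/4)^k)"
  by (simp add: hyp1F2_def coef_def)

lemma hyp_sym: "hyp1F2 a b c x = hyp1F2 a c b x"
  by (simp add: hyp1F2_def mult_ac)

lemma coef_pos: "a > 0 \<Longrightarrow> b > 0 \<Longrightarrow> c > 0 \<Longrightarrow> coef a b c k > 0"
  by (simp add: coef_def pochhammer_pos)

lemma coef_Suc:
  assumes "b > 0" "c > 0"
  shows "coef a b c (Suc k) = coef a b c k * ((a + k) / ((k+1) * (b+k) * (c+k)))"
proof -
  have "pochhammer b k > 0" "pochhammer c k > 0" using assms by (simp_all add: pochhammer_pos)
  moreover have "b + k > 0" "c + k > 0" using assms by auto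
  ultimately show ?thesis
    by (simp add: coef_def pochhammer_Suc field_simps)
qed

lemma ratio_summable:
  fixes cf :: "nat \<Rightarrow> real"
  assumes nz: "\<And>k. cf k \<noteq> 0" and lim: "(\<lambda>k. cf (Suc k) / cf k) \<longlonglongrightarrow> 0"
  shows "summable (\<lambda>k. \<bar>cf k * z ^ k\<bar>)"
proof -
  have "(\<lambda>k. \<bar>cf (Suc k) / cf k\<bar> * \<bar>z\<bar>) \<longlonglongrightarrow> 0 * \<bar>z\<bar>"
    by (intro tendsto_mult tendsto_rabs_zero lim tendsto_const)
  hence "eventually (\<lambda>k. \<bar>cf (Suc k) / cf k\<bar> * \<bar>z\<bar> < 1/2) sequentially"
    by (intro order_tendstoD(2)) auto
  then obtain N where N: "\<And>k. k \<ge> N \<Longrightarrow> \<bar>cf (Suc k) / cf k\<bar> * \<bar>z\<bar> < 1/2"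
    by (auto simp: eventually_sequentially)
  show ?thesis
  proof (rule summable_ratio_test[of "1/2" N])
    fix n assume n: "n \<ge> N"
    have "\<bar>cf (Suc n) * z^Suc n\<bar> = (\<bar>cf (Suc n) / cf n\<bar> * \<bar>z\<bar>) * \<bar>cf n * z^n\<bar>"
      using nz[of n] by (simp add: abs_mult power_Suc abs_divide field_simps)
    also have "\<dots> \<le> 1/2 * \<bar>cf n * z^n\<bar>" using N[OF n] by (intro mult_right_mono) auto
    finally show "norm \<bar>cf (Suc n) * z^Suc n\<bar> \<le> 1/2 * norm \<bar>cf n * z^n\<bar>" by simp
  qed simp
qed

lemma ratio_lim: "b > 0 \<Longrightarrow> c > 0 \<Longrightarrow> (\<lambda>k::nat. (a + real k) / ((real k + 1) * (b + real k) * (c + real k))) \<longlonglongrightarrow> 0"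
  by real_asymp

lemma coef_summable:
  assumes "a > 0" "b > 0" "c > 0"
  shows "summable (\<lambda>k. \<bar>coef a b c k * z ^ k\<bar>)"
proof (rule ratio_summable)
  show "coef a b c k \<noteq> 0" for k using coef_pos[OF assms, of k] by simp
  have "(\<lambda>k. coef a b c (Suc k) / coef a b c k) = (\<lambda>k. (a + real k) / ((real k + 1) * (b + real k) * (c + real k)))"
  proof
    fix k
    have "coef a b c k \<noteq> 0" using coef_pos[OF assms, of k] by simp
    then show "coef a b c (Suc k) / coef a b c k = (a + real k) / ((real k + 1) * (b + real k) * (c + real k))"
      by (simp add: coef_Suc[OF assms(2,3)])
  qed
  moreover have "(\<lambda>k. (a + real k) / ((real k + 1) * (b + real k) * (c + real k))) \<longlonglongrightarrow> 0"
    by (rule ratio_lim) (use assms in auto)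
  ultimately show "(\<lambda>k. coef a b c (Suc k) / coef a b c k) \<longlonglongrightarrow> 0" by simp
qed

lemma coef_summable': "a > 0 \<Longrightarrow> b > 0 \<Longrightarrow> c > 0 \<Longrightarrow> summable (\<lambda>k. coef a b c k * z ^ k)"
  by (rule summable_rabs_cancel[OF coef_summable])

lemma hyp_zero: "hyp1F2 a b c 0 = 1"
proof -
  have "hyp1F2 a b c 0 = (\<Sum>k. coef a b c k * 0^k)" by (simp add: hyp_def2)
  also have "\<dots> = 1" by (subst powser_zero) (simp add: coef_def)
  finally show ?thesis .
qed

lemma hyp_cont:
  assumes "a > 0" "b > 0" "c > 0"
  shows "isCont (hyp1F2 a b c) x"
proof -
  have S: "isCont (\<lambda>w. \<Sum>k. coef a b c k * w^k) w" for w
    by (rule isCont_powser[where K = "\<bar>w\<bar>+1"]) (use coef_summable'[OF assms] in auto)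
  have "isCont (\<lambda>x. \<Sum>k. coef a b c k * (-(x^2)/4)^k) x"
    by (rule isCont_o2[OF _ S]) (intro continuous_intros, simp)
  then show ?thesis unfolding hyp_def2[abs_def] .
qed



lemma ennreal_half: "ennreal B = 2 * I \<Longrightarrow> I = ennreal (B / 2)"
proof -
  assume h: "ennreal B = 2 * I"
  have "ennreal B = 2 * ennreal (B/2)" using ennreal_mult'[of 2 "B/2"] by simp
  with h have "2 * ennreal (B/2) = 2 * I" by simp
  then show ?thesis using ennreal_mult_cancel_left[of 2 "ennreal (B/2)" I] by simp
qed

lemma ennreal_2mult: "ennreal (2 * y) = 2 * ennreal y"
  using ennreal_mult'[of 2 y] by simp

lemma kernel_nn:
  fixes s d :: real
  assumes s: "s > 0" and d: "d > 0"
  shows "(\<integral>\<^sup>+t. ennreal (t powr (2 * s-1) * (1-t\<^sup>2) powr (d-1) * indicator {0..1} t) \<partial>lborel)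
          = ennreal (Beta s d / 2)"
proof -
  have "((\<lambda>t. t powr (s - 1) * (1 - t) powr (d - 1)) has_integral Beta s d) {0..1}"
    using has_integral_Beta_real[OF s d] by simp
  from nn_integral_has_integral_lebesgue[OF _ this] have
     "ennreal (Beta s d) =
        nn_integral lborel (\<lambda>t. ennreal (t powr (s - 1) * (1 - t) powr (d-1) *
                                indicator {0^2..1^2} t))"
    by (simp add: mult_ac ennreal_mult' ennreal_indicator)
  also have "\<dots> = (\<integral>\<^sup>+ x. ennreal ((x\<^sup>2) powr (s-1) * (1 - x\<^sup>2) powr (d-1) * (2 * x) *
                          indicator {0..1} x) \<partial>lborel)"
    by (subst nn_integral_substitution[where g = "\<lambda>x. x ^ 2" and g' = "\<lambda>x. 2 * x"])
       (auto intro!: derivative_eq_intros continuous_intros simp: set_borel_measurable_def)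
  also have "\<dots> = (\<integral>\<^sup>+ x. 2 * ennreal (x powr (2 * s-1) * (1-x\<^sup>2) powr (d-1) * indicator {0..1} x) \<partial>lborel)"
  proof (intro nn_integral_cong)
    fix x :: real
    show "ennreal ((x\<^sup>2) powr (s-1) * (1 - x\<^sup>2) powr (d-1) * (2 * x) * indicator {0..1} x) =
          2 * ennreal (x powr (2 * s-1) * (1-x\<^sup>2) powr (d-1) * indicator {0..1} x)"
    proof (cases "x > 0 \<and> x \<le> 1")
      case True
      then have "(x\<^sup>2) powr (s-1) * (2 * x) = 2 * x powr (2 * s-1)"
      proof -
        have x0: "x > 0" using True by simp
        have "x\<^sup>2 = x powr 2" using x0 by (simp add: powr_numeral)
        then have "(x\<^sup>2) powr (s-1) = x powr (2*(s-1))" by (simp add: powr_powr)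
        moreover have "x powr (2*(s-1)) * x = x powr (2 * s - 1)"
        proof -
          have "x powr (2*(s-1) + 1) = x powr (2*(s-1)) * x"
            using x0 by (subst powr_add) simp
          moreover have "2*(s-1) + 1 = 2 * s - 1" by simp
          ultimately show ?thesis by metis
        qed
        ultimately show ?thesis by (simp add: algebra_simps)
      qed
      then have "(x\<^sup>2) powr (s-1) * (1 - x\<^sup>2) powr (d-1) * (2 * x) * indicator {0..1} x
           = 2 * (x powr (2 * s - 1) * (1-x\<^sup>2) powr (d-1) * indicator {0..1} x)"
      proof -
        have "(x\<^sup>2) powr (s-1) * (1 - x\<^sup>2) powr (d-1) * (2 * x) * indicator {0..1} x
           = ((x\<^sup>2) powr (s-1) * (2 * x)) * ((1-x\<^sup>2) powr (d-1) * indicator {0..1} x)"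
          by (simp only: mult_ac)
        also have "\<dots> = 2 * (x powr (2 * s - 1) * (1-x\<^sup>2) powr (d-1) * indicator {0..1} x)"
          unfolding \<open>(x\<^sup>2) powr (s-1) * (2 * x) = 2 * x powr (2 * s-1)\<close> by (simp only: mult_ac)
        finally show ?thesis .
      qed
      then show ?thesis by (simp only: ennreal_2mult)
    next
      case False
      then show ?thesis by (auto simp: indicator_def)
    qed
  qed
  also have "\<dots> = 2 * (\<integral>\<^sup>+ x. ennreal (x powr (2 * s-1) * (1-x\<^sup>2) powr (d-1) * indicator {0..1} x) \<partial>lborel)"
    by (subst nn_integral_cmult) auto
  finally have "ennreal (Beta s d) = 2 * (\<integral>\<^sup>+ x. ennreal (x powr (2 * s-1) * (1-x\<^sup>2) powr (d-1) * indicator {0..1} x) \<partial>lborel)" .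
  then show ?thesis using ennreal_half by simp
qed

lemma Beta_pos: "s > 0 \<Longrightarrow> d > 0 \<Longrightarrow> Beta s d > (0::real)"
  by (simp add: Beta_def)

lemma kernel_int:
  fixes s d :: real assumes s: "s > 0" and d: "d > 0"
  shows "has_bochner_integral lborel (\<lambda>t. t powr (2 * s - 1) * (1-t\<^sup>2) powr (d-1) * indicator {0..1} t) (Beta s d / 2)"
proof (rule has_bochner_integral_nn_integral)
  show "(\<lambda>t. t powr (2 * s - 1) * (1-t\<^sup>2) powr (d-1) * indicator {0..1} t) \<in> borel_measurable lborel"
    by measurable
  show "AE t in lborel. 0 \<le> t powr (2 * s - 1) * (1-t\<^sup>2) powr (d-1) * indicator {0..1} t"
    by (intro AE_I2) (auto simp: indicator_def)
  show "0 \<le> Beta s d / 2" using Beta_pos[OF s d] by simp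
  show "(\<integral>\<^sup>+t. ennreal (t powr (2 * s - 1) * (1-t\<^sup>2) powr (d-1) * indicator {0..1} t) \<partial>lborel) = ennreal (Beta s d / 2)"
    by (rule kernel_nn[OF s d])
qed

definition K0 :: "real \<Rightarrow> real \<Rightarrow> real \<Rightarrow> real" where
  "K0 b d t = t powr (2 * b - 1) * (1-t\<^sup>2) powr (d-1) * indicator {0..1} t"

lemma K0_nonneg: "K0 b d t \<ge> 0"
  by (auto simp: K0_def indicator_def)

lemma K0_pos: "0 < t \<Longrightarrow> t < 1 \<Longrightarrow> K0 b d t > 0"
proof -
  assume t: "0 < t" "t < 1"
  then have "t\<^sup>2 < 1" by (simp add: power_less_one_iff abs_less_iff)
  then have "1 - t\<^sup>2 \<noteq> 0" by simp
  with t show ?thesis by (simp add: K0_def indicator_def)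
qed

lemma powk:
  fixes t b :: real
  assumes "t \<ge> 0"
  shows "t^(2*k) * t powr (2 * b - 1) = t powr (2 * (b + real k) - 1)"
proof (cases "t = 0")
  case True then show ?thesis by simp
next
  case False
  then have t: "t > 0" using assms by simp
  have "t^(2*k) = t powr (real (2*k))" by (rule powr_realpow[OF t, symmetric])
  then have "t^(2*k) * t powr (2 * b - 1) = t powr (real (2*k) + (2 * b - 1))"
    by (simp add: powr_add)
  also have "real (2*k) + (2 * b - 1) = 2 * (b + real k) - 1" by simp
  finally show ?thesis .
qed

lemma tK0: "t^(2*k) * K0 b d t = K0 (b + real k) d t"
proof (cases "t \<in> {0..1}")
  case True
  then have "t \<ge> 0" by simp
  from powk[OF this, of k b] show ?thesis
    by (simp add: K0_def mult_ac)
next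
  case False then show ?thesis by (simp add: K0_def)
qed

lemma coef_Beta:
  assumes b: "b > 0" and c: "c > 0" and d: "d > 0"
  shows "coef a b c k * Beta (b + real k) d = coef a (b+d) c k * Beta b d"
proof -
  have nb: "b \<notin> \<int>\<^sub>\<le>\<^sub>0" "b + d \<notin> \<int>\<^sub>\<le>\<^sub>0" using b d by (auto dest: nonpos_Ints_nonpos)
  have pb: "pochhammer b k = Gamma (b + real k) / Gamma b" by (rule pochhammer_Gamma[OF nb(1)])
  have pbd: "pochhammer (b+d) k = Gamma (b + d + real k) / Gamma (b + d)" by (rule pochhammer_Gamma[OF nb(2)])
  have g: "Gamma b > 0" "Gamma (b + real k) > 0" "Gamma d > 0" "Gamma (b+d) > 0" "Gamma (b + d + real k) > 0"
    using b d by auto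
  have e: "b + real k + d = b + d + real k" by simp
  have "pochhammer c k > 0" using c by (simp add: pochhammer_pos)
  with g show ?thesis
    unfolding coef_def Beta_def pb pbd e by (simp add: field_simps)
qed



lemma kernel_intk:
  assumes b: "b > 0" and d: "d > 0"
  shows "has_bochner_integral lborel (\<lambda>t. t^(2*k) * K0 b d t) (Beta (b + real k) d / 2)"
proof -
  have "has_bochner_integral lborel (\<lambda>t. K0 (b + real k) d t) (Beta (b + real k) d / 2)"
    unfolding K0_def by (rule kernel_int) (use b d in auto)
  then show ?thesis by (simp only: tK0)
qed

lemma raise_int:
  assumes a: "a > 0" and b: "b > 0" and c: "c > 0" and d: "d > 0"
  shows "integrable lborel (\<lambda>t. hyp1F2 a b c (x*t) * K0 b d t)"
    and "(\<integral>t. hyp1F2 a b c (x*t) * K0 b d t \<partial>lborel) = Beta b d / 2 * hyp1F2 a (b+d) c x"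
proof -
  define z where "z = -(x^2)/4"
  define F where "F = (\<lambda>k t. coef a b c k * z^k * (t^(2*k) * K0 b d t))"
  have hasF: "has_bochner_integral lborel (F k) (coef a b c k * z^k * (Beta (b + real k) d / 2))" for k
    unfolding F_def by (rule has_bochner_integral_mult_right) (rule kernel_intk[OF b d])
  have nF: "(\<lambda>t. norm (F k t)) = (\<lambda>t. \<bar>coef a b c k * z^k\<bar> * (t^(2*k) * K0 b d t))" for k
  proof
    fix t
    have "t^(2*k) * K0 b d t \<ge> 0" by (simp only: tK0 K0_nonneg)
    then show "norm (F k t) = \<bar>coef a b c k * z^k\<bar> * (t^(2*k) * K0 b d t)"
      unfolding F_def real_norm_def abs_mult[of "coef a b c k * z^k"] by simp
  qed
  have hasN: "has_bochner_integral lborel (\<lambda>t. norm (F k t)) (\<bar>coef a b c k * z^k\<bar> * (Beta (b + real k) d / 2))" for k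
    unfolding nF by (rule has_bochner_integral_mult_right) (rule kernel_intk[OF b d])
  have cB: "coef a b c k * Beta (b + real k) d = coef a (b+d) c k * Beta b d" for k
    by (rule coef_Beta[OF b c d])
  have cbN: "\<bar>coef a b c k * z^k\<bar> * (Beta (b + real k) d / 2) = \<bar>coef a (b+d) c k * z^k\<bar> * (Beta b d / 2)" for k
  proof -
    have p: "coef a b c k > 0" "coef a (b+d) c k > 0" using coef_pos a b c d by auto
    have "\<bar>coef a b c k * z^k\<bar> * (Beta (b + real k) d / 2) = (coef a b c k * Beta (b + real k) d) * \<bar>z^k\<bar> / 2"
      using p by (simp add: abs_mult)
    also have "\<dots> = (coef a (b+d) c k * Beta b d) * \<bar>z^k\<bar> / 2" by (simp only: cB)
    also have "\<dots> = \<bar>coef a (b+d) c k * z^k\<bar> * (Beta b d / 2)" using p by (simp add: abs_mult)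
    finally show ?thesis .
  qed
  have cbS: "coef a b c k * z^k * (Beta (b + real k) d / 2) = coef a (b+d) c k * z^k * (Beta b d / 2)" for k
  proof -
    have "coef a b c k * z^k * (Beta (b + real k) d / 2) = (coef a b c k * Beta (b + real k) d) * z^k / 2"
      by simp
    also have "\<dots> = (coef a (b+d) c k * Beta b d) * z^k / 2" by (simp only: cB)
    also have "\<dots> = coef a (b+d) c k * z^k * (Beta b d / 2)" by simp
    finally show ?thesis .
  qed
  have bd: "b + d > 0" using b d by simp
  have sumN: "summable (\<lambda>k. \<integral>t. norm (F k t) \<partial>lborel)"
  proof -
    have "summable (\<lambda>k. \<bar>coef a (b+d) c k * z^k\<bar> * (Beta b d / 2))"
      by (rule summable_mult2) (rule coef_summable[OF a bd c])
    then show ?thesis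
      by (simp only: hasN[THEN has_bochner_integral_integral_eq] cbN)
  qed
  have sumAE: "AE t in lborel. summable (\<lambda>k. norm (F k t))"
  proof (rule AE_I2)
    fix t :: real
    have "summable (\<lambda>k. \<bar>coef a b c k * z^k\<bar> * K0 b d t)"
      by (rule summable_mult2) (rule coef_summable[OF a b c])
    moreover have "norm (norm (F k t)) \<le> \<bar>coef a b c k * z^k\<bar> * K0 b d t" for k
    proof -
      have "t^(2*k) * K0 b d t \<le> K0 b d t"
      proof (cases "t \<in> {0..1}")
        case True
        then have "t^(2*k) \<le> 1" by (intro power_le_one) auto
        then show ?thesis using K0_nonneg[of b d t] by (simp add: mult_left_le_one_le)
      next
        case False then show ?thesis by (simp add: K0_def)
      qed
      then have "\<bar>coef a b c k * z^k\<bar> * (t^(2*k) * K0 b d t) \<le> \<bar>coef a b c k * z^k\<bar> * K0 b d t"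
        by (rule mult_left_mono) simp
      moreover have "norm (norm (F k t)) = \<bar>coef a b c k * z^k\<bar> * (t^(2*k) * K0 b d t)"
        using fun_cong[OF nF[of k], of t] by simp
      ultimately show ?thesis by simp
    qed
    ultimately show "summable (\<lambda>k. norm (F k t))"
      by (rule summable_comparison_test'[where N = 0])
  qed
  have intF: "integrable lborel (F k)" for k by (rule integrable.intros[OF hasF])
  have sumF: "(\<Sum>k. F k t) = hyp1F2 a b c (x*t) * K0 b d t" for t
  proof -
    have e: "(-((x*t)^2)/4)^k = z^k * t^(2*k)" for k
    proof -
      have "-((x*t)^2)/4 = z * t^2" by (simp add: z_def power_mult_distrib)
      then show ?thesis by (simp add: power_mult_distrib power_mult)
    qed
    have "hyp1F2 a b c (x*t) = (\<Sum>k. coef a b c k * z^k * t^(2*k))"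
      unfolding hyp_def2 e by (simp add: mult_ac)
    moreover have "summable (\<lambda>k. coef a b c k * z^k * t^(2*k))"
    proof -
      have e2: "(z * t^2)^k = z^k * t^(2*k)" for k by (simp add: power_mult_distrib power_mult)
      have "summable (\<lambda>k. coef a b c k * (z * t^2)^k)" by (rule coef_summable'[OF a b c])
      then show ?thesis unfolding e2 by (simp only: mult.assoc)
    qed
    ultimately have "hyp1F2 a b c (x*t) * K0 b d t = (\<Sum>k. coef a b c k * z^k * t^(2*k) * K0 b d t)"
      by (simp only: suminf_mult2)
    then show ?thesis
      unfolding F_def by (simp only: mult.assoc)
  qed
  have eqf: "(\<lambda>t. hyp1F2 a b c (x*t) * K0 b d t) = (\<lambda>t. \<Sum>k. F k t)" using sumF by simp
  show "integrable lborel (\<lambda>t. hyp1F2 a b c (x*t) * K0 b d t)"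
    unfolding eqf by (rule integrable_suminf[OF intF sumAE sumN])
  have "(\<integral>t. hyp1F2 a b c (x*t) * K0 b d t \<partial>lborel) = (\<Sum>k. integral\<^sup>L lborel (F k))"
    unfolding eqf by (rule integral_suminf[OF intF sumAE sumN])
  also have "\<dots> = (\<Sum>k. coef a (b+d) c k * z^k * (Beta b d / 2))"
    by (simp only: hasF[THEN has_bochner_integral_integral_eq] cbS)
  also have "\<dots> = (\<Sum>k. coef a (b+d) c k * z^k) * (Beta b d / 2)"
    by (rule suminf_mult2[symmetric]) (rule coef_summable'[OF a bd c])
  also have "\<dots> = Beta b d / 2 * hyp1F2 a (b+d) c x"
    by (simp add: hyp_def2 z_def)
  finally show "(\<integral>t. hyp1F2 a b c (x*t) * K0 b d t \<partial>lborel) = Beta b d / 2 * hyp1F2 a (b+d) c x" .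
qed



lemma raise_pos:
  assumes a: "a > 0" and b: "b > 0" and c: "c > 0" and d: "d > 0"
    and nn: "\<And>t. 0 \<le> t \<Longrightarrow> t \<le> 1 \<Longrightarrow> hyp1F2 a b c (x*t) \<ge> 0"
  shows "hyp1F2 a (b+d) c x > 0"
proof -
  define f where "f = (\<lambda>t. hyp1F2 a b c (x*t) * K0 b d t)"
  have int: "integrable lborel f" unfolding f_def by (rule raise_int(1)[OF a b c d])
  have I: "integral\<^sup>L lborel f = Beta b d / 2 * hyp1F2 a (b+d) c x"
    unfolding f_def by (rule raise_int(2)[OF a b c d])
  have fnn: "f t \<ge> 0" for t
  proof (cases "t \<in> {0..1}")
    case True then show ?thesis using nn[of t] K0_nonneg[of b d t] by (simp add: f_def)
  next
    case False then show ?thesis by (simp add: f_def K0_def)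
  qed
  have AEnn: "AE t in lborel. 0 \<le> f t" using fnn by simp
  have Inn: "integral\<^sup>L lborel f \<ge> 0" by (rule integral_nonneg_AE[OF AEnn])
  have Inz: "integral\<^sup>L lborel f \<noteq> 0"
  proof
    assume "integral\<^sup>L lborel f = 0"
    then have AE0: "AE t in lborel. f t = 0" using integral_nonneg_eq_0_iff_AE[OF int AEnn] by simp
    have cont: "isCont (\<lambda>t. hyp1F2 a b c (x*t)) 0"
      by (rule isCont_o2[OF _ hyp_cont[OF a b c]]) (intro continuous_intros)
    then have "((\<lambda>t. hyp1F2 a b c (x*t)) \<longlongrightarrow> 1) (at 0)"
      by (simp add: isCont_def hyp_zero)
    then have "eventually (\<lambda>t. hyp1F2 a b c (x*t) > 1/2) (at 0)"
      by (rule order_tendstoD(1)) simp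
    then obtain \<eta> where eta: "\<eta> > 0" and etaP: "\<And>t. t \<noteq> 0 \<Longrightarrow> dist t 0 < \<eta> \<Longrightarrow> hyp1F2 a b c (x*t) > 1/2"
      unfolding eventually_at by blast
    define e where "e = min \<eta> 1"
    have e: "e > 0" "e \<le> 1" "e \<le> \<eta>" using eta by (auto simp: e_def)
    from AE0 obtain N where N: "{t \<in> space lborel. \<not> f t = 0} \<subseteq> N" "emeasure lborel N = 0" "N \<in> sets lborel"
      by (rule AE_E)
    have sub: "{0<..<e} \<subseteq> N"
    proof
      fix t assume t: "t \<in> {0<..<e}"
      then have "hyp1F2 a b c (x*t) > 1/2" using e by (intro etaP) auto
      moreover have "K0 b d t > 0" using t e by (intro K0_pos) auto
      ultimately have "f t \<noteq> 0" unfolding f_def by simp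
      then show "t \<in> N" using N(1) by auto
    qed
    have "emeasure lborel {0<..<e} \<le> emeasure lborel N" by (rule emeasure_mono[OF sub N(3)])
    then show False using N(2) e by simp
  qed
  have Bp: "Beta b d > 0" by (rule Beta_pos[OF b d])
  from Inn Inz have "integral\<^sup>L lborel f > 0" by simp
  then show ?thesis unfolding I using Bp by (simp add: zero_less_mult_iff)
qed

lemma LBINT_K0:
  "(LBINT t=0..1. g t * (1-t\<^sup>2) powr (d-1) * t powr (2*b-1)) = (\<integral>t. g t * K0 b d t \<partial>lborel)"
proof -
  have "(LBINT t=0..1. g t * (1-t\<^sup>2) powr (d-1) * t powr (2*b-1)) =
        (LBINT t=ereal 0..ereal 1. g t * (1-t\<^sup>2) powr (d-1) * t powr (2*b-1))"
    by (simp add: zero_ereal_def one_ereal_def)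
  also have "\<dots> = (LBINT t:{0..1}. g t * (1-t\<^sup>2) powr (d-1) * t powr (2*b-1))"
    by (rule interval_integral_Icc) simp
  also have "\<dots> = (\<integral>t. g t * K0 b d t \<partial>lborel)"
    unfolding set_lebesgue_integral_def K0_def by (rule Bochner_Integration.integral_cong) (auto simp: indicator_def)
  finally show ?thesis .
qed



lemma sum_rev_atMost: "(\<Sum>j\<le>n. g j) = (\<Sum>j\<le>n. g (n - j))" for g :: "nat \<Rightarrow> real"
  by (rule sum.reindex_bij_witness[where i="\<lambda>i. n - i" and j="\<lambda>i. n - i"]) auto

lemma sum_lin2: "(\<Sum>j\<in>S. c1 * f j + c2 * g j) = c1 * sum f S + c2 * sum g S" for f g :: "nat \<Rightarrow> real"
  by (simp add: sum.distrib sum_distrib_left)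

lemma conv_rec:
  fixes u :: "nat \<Rightarrow> real" and v :: real
  assumes rec: "\<And>j. u (Suc j) * (real (Suc j) * (real (Suc j) + v)) = u j"
  shows "(\<Sum>j\<le>Suc m. u j * u (Suc m - j)) * (real (Suc m) * (real (Suc m) + v) * (real (Suc m) + 2 * v))
         = 2 * (2 * real m + 2 * v + 1) * (\<Sum>j\<le>m. u j * u (m - j))"
proof -
  define w where "w = (\<lambda>n j. u j * u (n - j))"
  define A where "A = (\<lambda>n. \<Sum>j\<le>n. w n j)"
  define P where "P = (\<lambda>n. \<Sum>j\<le>n. real j * w n j)"
  define Q where "Q = (\<lambda>n. \<Sum>j\<le>n. real j ^ 2 * w n j)"
  have wsym: "j \<le> n \<Longrightarrow> w n (n - j) = w n j" for n j by (simp add: w_def mult.commute)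
  have F1: "2 * P n = real n * A n" for n
  proof -
    have "P n = (\<Sum>j\<le>n. real (n - j) * w n (n - j))" unfolding P_def by (rule sum_rev_atMost)
    also have "\<dots> = (\<Sum>j\<le>n. real n * w n j + (-1) * (real j * w n j))"
      by (rule sum.cong) (auto simp: wsym of_nat_diff algebra_simps)
    also have "\<dots> = real n * A n - P n" unfolding sum_lin2 A_def P_def by simp
    finally show ?thesis by simp
  qed
  define n where "n = Suc m"
  define N where "N = real (Suc m)"
  have F2: "Q n + v * P n = A m"
  proof -
    have "Q n + v * P n = (\<Sum>j\<le>n. 1 * (real j ^ 2 * w n j) + v * (real j * w n j))"
      unfolding sum_lin2 Q_def P_def by simp
    also have "\<dots> = (\<Sum>j\<le>Suc m. real j * (real j + v) * u j * u (Suc m - j))"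
      unfolding n_def w_def by (rule sum.cong) (auto simp: algebra_simps power2_eq_square)
    also have "\<dots> = (\<Sum>i\<le>m. real (Suc i) * (real (Suc i) + v) * u (Suc i) * u (Suc m - Suc i))"
      by (subst sum.atMost_Suc_shift) simp
    also have "\<dots> = (\<Sum>i\<le>m. u i * u (m - i))"
    proof (rule sum.cong)
      fix i assume "i \<in> {..m}"
      have "real (Suc i) * (real (Suc i) + v) * u (Suc i) = u i"
        using rec[of i] by (simp only: mult_ac)
      then show "real (Suc i) * (real (Suc i) + v) * u (Suc i) * u (Suc m - Suc i) = u i * u (m - i)"
        by simp
    qed simp
    finally show ?thesis unfolding A_def w_def .
  qed
  have F3: "(\<Sum>j\<le>n. real j * (real j + v) * (N - real j) * w n j) = real m * A m / 2"
  proof -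
    have "(\<Sum>j\<le>n. real j * (real j + v) * (N - real j) * w n j)
        = (\<Sum>i\<le>m. real (Suc i) * (real (Suc i) + v) * (N - real (Suc i)) * (u (Suc i) * u (Suc m - Suc i)))"
      unfolding n_def w_def by (subst sum.atMost_Suc_shift) simp
    also have "\<dots> = (\<Sum>i\<le>m. real m * w m i + (-1) * (real i * w m i))"
    proof (rule sum.cong)
      fix i assume "i \<in> {..m}"
      have "real (Suc i) * (real (Suc i) + v) * u (Suc i) = u i"
        using rec[of i] by (simp only: mult_ac)
      have "real (Suc i) * (real (Suc i) + v) * (N - real (Suc i)) * (u (Suc i) * u (Suc m - Suc i))
          = (real (Suc i) * (real (Suc i) + v) * u (Suc i)) * (N - real (Suc i)) * u (m - i)"
        by (simp only: diff_Suc_Suc mult_ac)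
      also have "\<dots> = u i * (real m - real i) * u (m - i)" unfolding \<open>real (Suc i) * (real (Suc i) + v) * u (Suc i) = u i\<close>
        by (simp add: N_def)
      finally show "real (Suc i) * (real (Suc i) + v) * (N - real (Suc i)) * (u (Suc i) * u (Suc m - Suc i))
          = real m * w m i + (-1) * (real i * w m i)"
        unfolding w_def by (simp add: algebra_simps)
    qed simp
    also have "\<dots> = real m * A m - P m" unfolding sum_lin2 A_def P_def by simp
    finally show ?thesis using F1[of m] by linarith
  qed
  have F4: "(\<Sum>j\<le>n. real j * (N - real j) * (N - real j + v) * w n j) = real m * A m / 2"
  proof -
    have "(\<Sum>j\<le>n. real j * (N - real j) * (N - real j + v) * w n j)
        = (\<Sum>j\<le>n. real (n - j) * (N - real (n - j)) * (N - real (n - j) + v) * w n (n - j))"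
      by (rule sum_rev_atMost)
    also have "\<dots> = (\<Sum>j\<le>n. real j * (real j + v) * (N - real j) * w n j)"
      by (rule sum.cong) (auto simp: wsym of_nat_diff N_def n_def algebra_simps)
    finally show ?thesis using F3 by simp
  qed
  have S34: "(\<Sum>j\<le>n. real j * (real j + v) * (N - real j) * w n j) + (\<Sum>j\<le>n. real j * (N - real j) * (N - real j + v) * w n j)
      = (N + 2 * v) * N * P n + (-(N + 2 * v)) * Q n"
  proof -
    have "(\<Sum>j\<le>n. real j * (real j + v) * (N - real j) * w n j) + (\<Sum>j\<le>n. real j * (N - real j) * (N - real j + v) * w n j)
        = (\<Sum>j\<le>n. real j * (real j + v) * (N - real j) * w n j + real j * (N - real j) * (N - real j + v) * w n j)"
      by (simp add: sum.distrib)
    also have "\<dots> = (\<Sum>j\<le>n. ((N + 2 * v) * N) * (real j * w n j) + (-(N + 2 * v)) * (real j ^ 2 * w n j))"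
      by (rule sum.cong) (auto simp: algebra_simps power2_eq_square)
    also have "\<dots> = (N + 2 * v) * N * P n + (-(N + 2 * v)) * Q n"
      unfolding sum_lin2 P_def Q_def by simp
    finally show ?thesis .
  qed
  have E1: "real m * A m = (N + 2 * v) * N * P n - (N + 2 * v) * Q n"
  proof -
    have "real m * A m = (N + 2 * v) * N * P n + (-(N + 2 * v)) * Q n" using S34 F3 F4 by linarith
    then show ?thesis by (simp add: algebra_simps)
  qed
  have E2: "(N + 2 * v) * (N + v) * P n = (real m + N + 2 * v) * A m"
  proof -
    have "Q n = A m - v * P n" using F2 by simp
    with E1 show ?thesis by (simp add: algebra_simps)
  qed
  have E3: "2 * P n = N * A n" using F1[of n] by (simp add: N_def n_def)
  have "A n * (N * (N + v) * (N + 2 * v)) = (N + 2 * v) * (N + v) * (2 * P n)"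
    unfolding E3 by (simp add: algebra_simps)
  also have "\<dots> = 2 * ((real m + N + 2 * v) * A m)" unfolding E2[symmetric] by (simp add: algebra_simps)
  finally have "A n * (N * (N + v) * (N + 2 * v)) = 2 * (2 * real m + 2 * v + 1) * A m"
    by (simp add: N_def algebra_simps)
  then show ?thesis unfolding A_def w_def n_def N_def .
qed



definition bc :: "real \<Rightarrow> nat \<Rightarrow> real" where
  "bc v k = 1 / (fact k * pochhammer (v+1) k)"

lemma nB_def2: "nBesselJ v x = (\<Sum>k. bc v k * (-(x^2)/4)^k)"
  by (simp add: nBesselJ_def bc_def)

lemma bc_pos: "v > -1 \<Longrightarrow> bc v k > 0"
  by (simp add: bc_def pochhammer_pos)

lemma bc_rec:
  assumes "v > -1"
  shows "bc v (Suc j) * (real (Suc j) * (real (Suc j) + v)) = bc v j"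
proof -
  define D where "D = fact j * pochhammer (v+1) j"
  define E where "E = real (Suc j) * (real (Suc j) + v)"
  have Dp: "D > 0" using assms by (simp add: D_def pochhammer_pos)
  have Ep: "E > 0" using assms by (simp add: E_def)
  have e1: "bc v (Suc j) = 1 / (D * E)"
    by (simp add: bc_def D_def E_def pochhammer_Suc algebra_simps)
  have e2: "bc v j = 1 / D" by (simp add: bc_def D_def)
  show ?thesis unfolding e1 e2 E_def[symmetric] using Dp Ep by simp
qed

lemma bc_ratio_lim: "(\<lambda>k::nat. 1 / ((real k + 1) * (real k + 1 + v))) \<longlonglongrightarrow> 0"
  by real_asymp

lemma bc_summable:
  assumes "v > -1"
  shows "summable (\<lambda>k. \<bar>bc v k * z ^ k\<bar>)"
proof (rule ratio_summable)
  show "bc v k \<noteq> 0" for k using bc_pos[OF assms, of k] by simp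
  have "(\<lambda>k. bc v (Suc k) / bc v k) = (\<lambda>k. 1 / ((real k + 1) * (real k + 1 + v)))"
  proof
    fix k
    define E where "E = (real k + 1) * (real k + 1 + v)"
    have Ep: "E > 0" using assms by (simp add: E_def)
    have "real (Suc k) * (real (Suc k) + v) = E" by (simp add: E_def algebra_simps)
    then have Ek: "bc v (Suc k) * E = bc v k" using bc_rec[OF assms, of k] by simp
    have "bc v (Suc k) \<noteq> 0" using bc_pos[OF assms, of "Suc k"] by simp
    then show "bc v (Suc k) / bc v k = 1 / ((real k + 1) * (real k + 1 + v))"
      unfolding E_def[symmetric] Ek[symmetric] using Ep by simp
  qed
  then show "(\<lambda>k. bc v (Suc k) / bc v k) \<longlonglongrightarrow> 0" using bc_ratio_lim by simp
qed

lemma conv_closed: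
  assumes a: "a > 0"
  shows "(\<Sum>j\<le>n. bc (a-1/2) j * bc (a-1/2) (n-j)) = 4^n * coef a (a+1/2) (2*a) n"
proof (induction n)
  case 0
  then show ?case by (simp add: bc_def coef_def)
next
  case (Suc m)
  define v where "v = a - 1/2"
  have v: "v > -1" using a by (simp add: v_def)
  define X where "X = real (Suc m) * (real (Suc m) + v) * (real (Suc m) + 2 * v)"
  have Xp: "X > 0" unfolding X_def using a v_def by (simp add: add_pos_pos)
  have R: "(\<Sum>j\<le>Suc m. bc v j * bc v (Suc m - j)) * X = 2 * (2 * real m + 2 * v + 1) * (\<Sum>j\<le>m. bc v j * bc v (m - j))"
    unfolding X_def by (rule conv_rec) (rule bc_rec[OF v])
  have IH: "(\<Sum>j\<le>m. bc v j * bc v (m - j)) = 4^m * coef a (a+1/2) (2*a) m" using Suc.IH by (simp add: v_def)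
  define D where "D = (real m + 1) * (a + 1/2 + real m) * (2*a + real m)"
  have Dp: "D > 0" unfolding D_def using a by (simp add: add_pos_pos)
  have XD: "X = D" by (simp add: X_def D_def v_def algebra_simps)
  have f: "2 * real m + 2 * v + 1 = 2 * (a + real m)" by (simp add: v_def)
  have cS: "coef a (a+1/2) (2*a) (Suc m) = coef a (a+1/2) (2*a) m * ((a + real m) / D)"
    using coef_Suc[of "a+1/2" "2*a" a m] a by (simp add: D_def algebra_simps)
  have "(\<Sum>j\<le>Suc m. bc v j * bc v (Suc m - j)) = 2 * (2 * real m + 2 * v + 1) * (4^m * coef a (a+1/2) (2*a) m) / X"
    using R Xp IH by (simp add: field_simps)
  also have "\<dots> = 4^(Suc m) * coef a (a+1/2) (2*a) (Suc m)"
    unfolding cS XD f using Dp by (simp add: field_simps)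
  finally show ?case by (simp add: v_def)
qed

lemma clausen:
  assumes a: "a > 0"
  shows "hyp1F2 a (a+1/2) (2*a) x = (nBesselJ (a-1/2) (x/2))^2"
proof -
  define v where "v = a - 1/2"
  have v: "v > -1" using a by (simp add: v_def)
  define w where "w = -((x/2)^2)/4"
  have s: "summable (\<lambda>k. norm (bc v k * w^k))" using bc_summable[OF v] by simp
  have "(nBesselJ v (x/2))^2 = (\<Sum>k. bc v k * w^k) * (\<Sum>k. bc v k * w^k)"
    by (simp add: nB_def2 w_def power2_eq_square)
  also have "\<dots> = (\<Sum>n. \<Sum>i\<le>n. (bc v i * w^i) * (bc v (n-i) * w^(n-i)))"
    by (rule Cauchy_product[OF s s])
  also have "\<dots> = (\<Sum>n. coef a (a+1/2) (2*a) n * (-(x^2)/4)^n)"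
  proof (rule suminf_cong)
    fix n
    have "(\<Sum>i\<le>n. (bc v i * w^i) * (bc v (n-i) * w^(n-i))) = (\<Sum>i\<le>n. bc v i * bc v (n-i)) * w^n"
      unfolding sum_distrib_right
    proof (rule sum.cong)
      fix i assume "i \<in> {..n}"
      then have "w^i * w^(n-i) = w^n" by (simp add: power_add[symmetric])
      then show "(bc v i * w^i) * (bc v (n-i) * w^(n-i)) = bc v i * bc v (n-i) * w^n"
        by (metis (no_types, lifting) mult.assoc mult.left_commute)
    qed simp
    also have "\<dots> = 4^n * coef a (a+1/2) (2*a) n * w^n" using conv_closed[OF a, of n] by (simp add: v_def)
    also have "\<dots> = coef a (a+1/2) (2*a) n * (4 * w)^n" by (simp add: power_mult_distrib)
    also have "4 * w = -(x^2)/4" by (simp add: w_def power_divide)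
    finally show "(\<Sum>i\<le>n. (bc v i * w^i) * (bc v (n-i) * w^(n-i))) = coef a (a+1/2) (2*a) n * (-(x^2)/4)^n" .
  qed
  also have "\<dots> = hyp1F2 a (a+1/2) (2*a) x" by (simp add: hyp_def2)
  finally show ?thesis by (simp add: v_def)
qed



lemma sturm_abstract:
  fixes y y1 y2 :: "real \<Rightarrow> real" and m :: real
  assumes Dy: "\<And>x. x > 0 \<Longrightarrow> (y has_real_derivative y1 x) (at x)"
    and Dy1: "\<And>x. x > 0 \<Longrightarrow> (y1 has_real_derivative y2 x) (at x)"
    and ode: "\<And>x. x > 0 \<Longrightarrow> y2 x = -(y x) - (2*m/x) * y1 x"
  shows "\<exists>x>0. y x \<le> 0"
proof (rule ccontr)
  assume "\<not> (\<exists>x>0. y x \<le> 0)"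
  then have ypos: "\<And>x. x > 0 \<Longrightarrow> y x > 0" by force
  define c where "c = m * m - m"
  define X where "X = 2 * \<bar>c\<bar> + 1"
  have X1: "X \<ge> 1" by (simp add: X_def)
  define p where "p = (\<lambda>x::real. x powr m)"
  define d where "d = (\<lambda>x. p x * (m / x * y x + y1 x))"
  define wf where "wf = (\<lambda>x. p x * y x)"
  define s where "s = (\<lambda>x. sin ((x - X) / 2))"
  define s1 where "s1 = (\<lambda>x. cos ((x - X) / 2) / 2)"
  define W where "W = (\<lambda>x. d x * s x - wf x * s1 x)"
  have Dp: "(p has_real_derivative m * p x / x) (at x)" if x: "x > 0" for x
  proof -
    have "x powr (m - 1) = x powr m / x" using x by (simp add: powr_diff)
    then show ?thesis unfolding p_def using has_real_derivative_powr[OF x, of m] by simp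
  qed
  have Dwf: "(wf has_real_derivative d x) (at x)" if x: "x > 0" for x
  proof -
    have "(wf has_real_derivative (m * p x / x) * y x + y1 x * p x) (at x)"
      unfolding wf_def by (rule DERIV_mult[OF Dp[OF x] Dy[OF x]])
    moreover have "(m * p x / x) * y x + y1 x * p x = d x" by (simp add: d_def algebra_simps)
    ultimately show ?thesis by simp
  qed
  have Dd: "(d has_real_derivative p x * y x * (c / x^2 - 1)) (at x)" if x: "x > 0" for x
  proof -
    have Dq: "((\<lambda>x. m / x * y x + y1 x) has_real_derivative (-(m / x^2) * y x + m / x * y1 x + y2 x)) (at x)"
      using x by (auto intro!: derivative_eq_intros Dy[OF x] Dy1[OF x] simp: power2_eq_square field_simps)
    have "(d has_real_derivative (m * p x / x) * (m / x * y x + y1 x) + (-(m / x^2) * y x + m / x * y1 x + y2 x) * p x) (at x)"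
      unfolding d_def by (rule DERIV_mult[OF Dp[OF x] Dq])
    moreover have "(m * p x / x) * (m / x * y x + y1 x) + (-(m / x^2) * y x + m / x * y1 x + y2 x) * p x
        = p x * y x * (c / x^2 - 1)"
      unfolding ode[OF x] c_def using x by (simp add: field_simps power2_eq_square)
    ultimately show ?thesis by simp
  qed
  have Ds: "(s has_real_derivative s1 x) (at x)" for x
    unfolding s_def s1_def by (auto intro!: derivative_eq_intros)
  have Ds1: "(s1 has_real_derivative -(s x) / 4) (at x)" for x
    unfolding s_def s1_def by (auto intro!: derivative_eq_intros)
  have DW: "(W has_real_derivative p x * y x * s x * (c / x^2 - 3/4)) (at x)" if x: "x > 0" for x
  proof -
    have "(W has_real_derivative (p x * y x * (c / x^2 - 1) * s x + s1 x * d x) - (d x * s1 x + (-(s x) / 4) * wf x)) (at x)"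
      unfolding W_def by (rule DERIV_diff[OF DERIV_mult[OF Dd[OF x] Ds] DERIV_mult[OF Dwf[OF x] Ds1]])
    moreover have "(p x * y x * (c / x^2 - 1) * s x + s1 x * d x) - (d x * s1 x + (-(s x) / 4) * wf x)
        = p x * y x * s x * (c / x^2 - 3/4)"
      by (simp add: wf_def algebra_simps)
    ultimately show ?thesis by simp
  qed
  have "W (X + 2 * pi) \<le> W X"
  proof (rule DERIV_nonpos_imp_nonincreasing[where f = W and a = X and b = "X + 2 * pi"])
    show "X \<le> X + 2 * pi" by simp
    fix x assume x: "X \<le> x" "x \<le> X + 2 * pi"
    then have xp: "x > 0" and x1: "x \<ge> 1" using X1 by auto
    have "x * 1 \<le> x * x" using x1 by (intro mult_left_mono) auto
    then have "x\<^sup>2 \<ge> x" by (simp add: power2_eq_square)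
    then have "x\<^sup>2 > 2 * \<bar>c\<bar>" using x(1) by (simp add: X_def)
    then have "c < x\<^sup>2 / 2" by linarith
    then have "c / x^2 < 1/2" using xp by (simp add: divide_less_eq)
    then have neg: "c / x^2 - 3/4 \<le> 0" by linarith
    have "0 \<le> (x - X) / 2" "(x - X) / 2 \<le> pi" using x by auto
    then have "s x \<ge> 0" unfolding s_def by (rule sin_ge_zero)
    moreover have "p x > 0" using xp by (simp add: p_def)
    moreover have "y x > 0" using ypos[OF xp] .
    ultimately have "p x * y x * s x \<ge> 0" by simp
    with neg have "p x * y x * s x * (c / x^2 - 3/4) \<le> 0" by (simp add: mult_nonneg_nonpos)
    then show "\<exists>y. (W has_real_derivative y) (at x) \<and> y \<le> 0" using DW[OF xp] by blast
  qed
  moreover have "W X < 0"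
  proof -
    have "X > 0" using X1 by simp
    then have "p X > 0" "y X > 0" using ypos by (auto simp: p_def)
    then show ?thesis by (simp add: W_def s_def s1_def wf_def)
  qed
  moreover have "W (X + 2 * pi) > 0"
  proof -
    have "X + 2 * pi > 0" using X1 pi_gt_zero by linarith
    then have "p (X + 2 * pi) > 0" "y (X + 2 * pi) > 0" using ypos by (auto simp: p_def)
    then show ?thesis by (simp add: W_def s_def s1_def wf_def)
  qed
  ultimately show False by simp
qed



lemma bessel_zero:
  assumes v: "v > -1"
  shows "\<exists>x>0. nBesselJ v x = 0"
proof -
  define c0 where "c0 = bc v"
  have S0: "summable (\<lambda>n. c0 n * z^n)" for z
    unfolding c0_def by (rule summable_rabs_cancel[OF bc_summable[OF v]])
  have S1: "summable (\<lambda>n. diffs c0 n * z^n)" for z by (rule termdiff_converges_all[OF S0])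
  have S2: "summable (\<lambda>n. diffs (diffs c0) n * z^n)" for z by (rule termdiff_converges_all[OF S1])
  define G0 where "G0 = (\<lambda>w::real. \<Sum>n. c0 n * w^n)"
  define G1 where "G1 = (\<lambda>w::real. \<Sum>n. diffs c0 n * w^n)"
  define G2 where "G2 = (\<lambda>w::real. \<Sum>n. diffs (diffs c0) n * w^n)"
  have D0: "(G0 has_field_derivative G1 w) (at w)" for w
    unfolding G0_def G1_def by (rule termdiffs_strong_converges_everywhere[OF S0])
  have D1: "(G1 has_field_derivative G2 w) (at w)" for w
    unfolding G1_def G2_def by (rule termdiffs_strong_converges_everywhere[OF S1])
  have ODE: "w * G2 w + (v+1) * G1 w = G0 w" for w
  proof -
    define h where "h = (\<lambda>n. real n * real (Suc n) * c0 (Suc n) * w^n)"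
    have hS: "h (Suc n) = w * (diffs (diffs c0) n * w^n)" for n
      by (simp add: h_def diffs_def algebra_simps)
    have sh1: "summable (\<lambda>n. h (Suc n))" unfolding hS by (rule summable_mult[OF S2])
    then have sh: "summable h" by (simp add: summable_Suc_iff)
    have "w * G2 w = (\<Sum>n. h (Suc n))" unfolding hS G2_def by (rule suminf_mult[OF S2, symmetric])
    also have "\<dots> = suminf h" using suminf_split_head[OF sh] by (simp add: h_def)
    finally have e1: "w * G2 w = suminf h" .
    have s3: "summable (\<lambda>n. (v+1) * (diffs c0 n * w^n))" by (rule summable_mult[OF S1])
    have e2: "(v+1) * G1 w = (\<Sum>n. (v+1) * (diffs c0 n * w^n))" unfolding G1_def by (rule suminf_mult[OF S1, symmetric])
    have "w * G2 w + (v+1) * G1 w = (\<Sum>n. h n + (v+1) * (diffs c0 n * w^n))"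
      unfolding e1 e2 by (rule suminf_add[OF sh s3])
    also have "\<dots> = (\<Sum>n. c0 n * w^n)"
    proof (rule suminf_cong)
      fix n
      have "h n + (v+1) * (diffs c0 n * w^n) = (c0 (Suc n) * (real (Suc n) * (real (Suc n) + v))) * w^n"
        by (simp add: h_def diffs_def algebra_simps)
      also have "\<dots> = c0 n * w^n" unfolding c0_def using bc_rec[OF v, of n] by simp
      finally show "h n + (v+1) * (diffs c0 n * w^n) = c0 n * w^n" .
    qed
    finally show ?thesis unfolding G0_def .
  qed
  define q where "q = (\<lambda>x::real. -(x^2)/4)"
  have Dq: "(q has_field_derivative -(x/2)) (at x)" for x
    unfolding q_def by (auto intro!: derivative_eq_intros)
  define y where "y = (\<lambda>x. G0 (q x))"
  define y1 where "y1 = (\<lambda>x. G1 (q x) * (-(x/2)))"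
  define y2 where "y2 = (\<lambda>x. G2 (q x) * (-(x/2)) * (-(x/2)) + (-(1/2)) * G1 (q x))"
  have Dy: "(y has_real_derivative y1 x) (at x)" for x
    unfolding y_def y1_def by (rule DERIV_chain2[OF D0 Dq])
  have Dh: "((\<lambda>x. -(x/2)) has_real_derivative -(1/2)) (at x)" for x
    by (auto intro!: derivative_eq_intros)
  have Dy1: "(y1 has_real_derivative y2 x) (at x)" for x
    unfolding y1_def y2_def by (rule DERIV_mult[OF DERIV_chain2[OF D1 Dq] Dh])
  define m where "m = v + 1/2"
  have ode: "y2 x = -(y x) - (2*m/x) * y1 x" if x: "x > 0" for x
  proof -
    have yx: "y x = q x * G2 (q x) + (v+1) * G1 (q x)" unfolding y_def using ODE[of "q x"] by simp
    show ?thesis using x unfolding yx y1_def y2_def m_def q_def by (simp add: field_simps power2_eq_square)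
  qed
  obtain x0 where x0: "x0 > 0" "y x0 \<le> 0"
    using sturm_abstract[of y y1 y2 m, OF Dy Dy1 ode] by blast
  have y0: "y 0 = 1"
  proof -
    have "y 0 = (\<Sum>n. c0 n * 0^n)" by (simp add: y_def G0_def q_def)
    also have "\<dots> = 1" by (subst powser_zero) (simp add: c0_def bc_def)
    finally show ?thesis .
  qed
  have cont: "continuous_on {0..x0} y"
    by (intro continuous_at_imp_continuous_on ballI DERIV_isCont[OF Dy])
  obtain z where z: "0 \<le> z" "z \<le> x0" "y z = 0"
    using IVT2'[of y x0 0 0, OF x0(2) _ _ cont] y0 x0(1) by auto
  have "z \<noteq> 0" using z(3) y0 by auto
  with z have "z > 0" by simp
  moreover have "nBesselJ v z = y z" unfolding nB_def2 y_def G0_def q_def c0_def by (rule refl)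
  ultimately have "z > 0 \<and> nBesselJ v z = 0" using z(3) by simp
  then show ?thesis by (intro exI[of _ z])
qed



lemma raise_eq:
  assumes a: "a > 0" and b: "b > 0" and c: "c > 0" and d: "d > 0"
  shows "(LBINT t=0..1. hyp1F2 a b c (x*t) * (1-t^2) powr (d-1) * t powr (2*b-1)) = Beta b d / 2 * hyp1F2 a (b+d) c x"
  using LBINT_K0[of "\<lambda>t. hyp1F2 a b c (x*t)" d b] raise_int(2)[OF a b c d, of x] by simp

lemma J2_nonneg: "a > 0 \<Longrightarrow> hyp1F2 a (a+1/2) (2*a) y \<ge> 0"
  by (simp add: clausen)

lemma part1:
  assumes a: "a > 0" and b: "b \<ge> a + 1/2" and c: "c \<ge> 2*a" and bc: "b + c > 3*a + 1/2"
  shows "hyp1F2 a b c x > 0"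
proof -
  have a2: "a + 1/2 > 0" "2*a > 0" using a by auto
  show ?thesis
  proof (cases "b > a + 1/2")
    case True
    have F1: "hyp1F2 a b (2*a) y > 0" for y
      using raise_pos[OF a a2(1) a2(2), of "b - (a+1/2)" y] True J2_nonneg[OF a] by simp
    show ?thesis
    proof (cases "c > 2*a")
      case True
      have bp: "b > 0" using a b by simp
      have "hyp1F2 a (2*a + (c - 2*a)) b x > 0"
        using raise_pos[OF a a2(2) bp, of "c - 2*a" x] True F1 by (simp add: hyp_sym[of a "2*a" b] less_imp_le)
      then show ?thesis by (simp add: hyp_sym[of a b c])
    next
      case False
      then have "c = 2*a" using c by simp
      then show ?thesis using F1 by simp
    qed
  next
    case False
    then have beq: "b = a + 1/2" using b by simp
    then have cg: "c > 2*a" using bc by simp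
    have "hyp1F2 a (2*a + (c - 2*a)) (a+1/2) x > 0"
      using raise_pos[OF a a2(2) a2(1), of "c - 2*a" x] cg J2_nonneg[OF a] by (simp add: hyp_sym[of a "2*a"])
    then show ?thesis using beq by (simp add: hyp_sym[of a "a + 1/2" c])
  qed
qed

lemma P12_nn:
  assumes "\<And>x. x > 0 \<Longrightarrow> hyp1F2 a b c x > 0" "x0 > 0" "0 \<le> t"
  shows "hyp1F2 a b c (x0*t) \<ge> 0"
proof (cases "t = 0")
  case True then show ?thesis by (simp add: hyp_zero)
next
  case False
  then have "x0 * t > 0" using assms(2,3) by simp
  then show ?thesis using assms(1) less_imp_le by blast
qed

lemma J_zero:
  assumes a: "a > 0"
  shows "\<exists>x0>0. hyp1F2 a (a+1/2) (2*a) x0 = 0"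
proof -
  have "a - 1/2 > -1" using a by simp
  from bessel_zero[OF this] obtain z where z: "z > 0" "nBesselJ (a - 1/2) z = 0" by blast
  have "hyp1F2 a (a+1/2) (2*a) (2*z) = 0" using clausen[OF a, of "2*z"] z by simp
  moreover have "2*z > 0" using z by simp
  ultimately show ?thesis by blast
qed

theorem theorem2:
  fixes a :: real
  assumes "a > 0"
  shows "(\<forall>b c. ((b \<ge> a + 1/2 \<and> c \<ge> 2*a) \<or> (b \<ge> 2*a \<and> c \<ge> a + 1/2))
                 \<and> b + c > 3*a + 1/2 \<longrightarrow> (a, b, c) \<in> P12)
     \<and> (\<forall>b. (a, b, 2*a) \<in> P12 \<longleftrightarrow> b > a + 1/2)
     \<and> (\<forall>\<delta>>0. \<forall>x>0.
          hyp1F2 a (a + 1/2 + \<delta>) (2*a) x =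
            2 / Beta \<delta> (a + 1/2) *
            (LBINT t=0..1. (nBesselJ (a - 1/2) (x*t/2))^2 * (1 - t^2) powr (\<delta> - 1) * t powr (2*a))
          \<and> hyp1F2 a (a + 1/2 + \<delta>) (2*a) x > 0)
     \<and> (\<forall>c. (a, a + 1/2, c) \<in> P12 \<longleftrightarrow> c > 2*a)
     \<and> (\<forall>\<epsilon>>0. \<forall>x>0.
          hyp1F2 a (a + 1/2) (2*a + \<epsilon>) x =
            2 / Beta \<epsilon> (2*a) *
            (LBINT t=0..1. (nBesselJ (a - 1/2) (x*t/2))^2 * (1 - t^2) powr (\<epsilon> - 1) * t powr (4*a - 1))
          \<and> hyp1F2 a (a + 1/2) (2*a + \<epsilon>) x > 0)"
proof (intro conjI allI impI)
  have a: "a > 0" by (rule assms)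
  have a2: "a + 1/2 > 0" "2*a > 0" using a by auto
  show "(a, b, c) \<in> P12" if h: "((b \<ge> a + 1/2 \<and> c \<ge> 2*a) \<or> (b \<ge> 2*a \<and> c \<ge> a + 1/2)) \<and> b + c > 3*a + 1/2" for b c
  proof -
    have bp: "b > 0" "c > 0" using h a by auto
    have "hyp1F2 a b c x > 0" for x
    proof -
      from h consider "b \<ge> a + 1/2" "c \<ge> 2*a" | "b \<ge> 2*a" "c \<ge> a + 1/2" by blast
      then show ?thesis
      proof cases
        case 1 then show ?thesis using part1[OF a] h by blast
      next
        case 2
        then have "hyp1F2 a c b x > 0" using part1[OF a, of c b x] h by simp
        then show ?thesis by (simp add: hyp_sym[of a b c])
      qed
    qed
    then show ?thesis using bp a by (simp add: P12_def)
  qed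
  show "(a, b, 2*a) \<in> P12 \<longleftrightarrow> b > a + 1/2" for b
  proof
    assume "b > a + 1/2"
    then have "hyp1F2 a b (2*a) x > 0" for x using part1[OF a, of b "2*a" x] by simp
    moreover have "b > 0" using \<open>b > a + 1/2\<close> a by simp
    ultimately show "(a, b, 2*a) \<in> P12" using a by (simp add: P12_def)
  next
    assume P: "(a, b, 2*a) \<in> P12"
    then have bp: "b > 0" and pos: "\<And>x. x > 0 \<Longrightarrow> hyp1F2 a b (2*a) x > 0" by (auto simp: P12_def)
    show "b > a + 1/2"
    proof (rule ccontr)
      assume "\<not> b > a + 1/2"
      then have ble: "b \<le> a + 1/2" by simp
      obtain x0 where x0: "x0 > 0" "hyp1F2 a (a+1/2) (2*a) x0 = 0" using J_zero[OF a] by blast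
      show False
      proof (cases "b = a + 1/2")
        case True then show False using pos[OF x0(1)] x0(2) by simp
      next
        case False
        then have dp: "a + 1/2 - b > 0" using ble by simp
        have "hyp1F2 a (b + (a + 1/2 - b)) (2*a) x0 > 0"
          by (rule raise_pos[OF a bp a2(2) dp]) (rule P12_nn[OF pos x0(1)], simp)
        then show False using x0(2) by simp
      qed
    qed
  qed
  show "(a, a + 1/2, c) \<in> P12 \<longleftrightarrow> c > 2*a" for c
  proof
    assume "c > 2*a"
    then have "hyp1F2 a (a + 1/2) c x > 0" for x using part1[OF a, of "a + 1/2" c x] by simp
    moreover have "c > 0" using \<open>c > 2*a\<close> a by simp
    ultimately show "(a, a + 1/2, c) \<in> P12" using a by (simp add: P12_def)
  next
    assume P: "(a, a + 1/2, c) \<in> P12"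
    then have cp: "c > 0" and pos: "\<And>x. x > 0 \<Longrightarrow> hyp1F2 a (a + 1/2) c x > 0" by (auto simp: P12_def)
    have pos': "\<And>x. x > 0 \<Longrightarrow> hyp1F2 a c (a + 1/2) x > 0" using pos by (simp add: hyp_sym[of a c])
    show "c > 2*a"
    proof (rule ccontr)
      assume "\<not> c > 2*a"
      then have cle: "c \<le> 2*a" by simp
      obtain x0 where x0: "x0 > 0" "hyp1F2 a (a+1/2) (2*a) x0 = 0" using J_zero[OF a] by blast
      show False
      proof (cases "c = 2*a")
        case True then show False using pos[OF x0(1)] x0(2) by simp
      next
        case False
        then have dp: "2*a - c > 0" using cle by simp
        have "hyp1F2 a (c + (2*a - c)) (a + 1/2) x0 > 0"
          by (rule raise_pos[OF a cp a2(1) dp]) (rule P12_nn[OF pos' x0(1)], simp)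
        then show False using x0(2) by (simp add: hyp_sym[of a "2*a"])
      qed
    qed
  qed
  fix \<delta> x :: real
  assume d: "\<delta> > 0" and x: "x > 0"
  {
    have ex: "2 * (a + 1/2) - 1 = 2*a" by simp
    have pe: "hyp1F2 a (a+1/2) (2*a) (x*t) * (1-t^2) powr (\<delta>-1) * t powr (2 * (a + 1/2) - 1)
            = (nBesselJ (a - 1/2) (x*t/2))^2 * (1 - t^2) powr (\<delta> - 1) * t powr (2*a)" for t
      unfolding ex clausen[OF a] by (rule refl)
    have "(LBINT t=0..1. (nBesselJ (a - 1/2) (x*t/2))^2 * (1 - t^2) powr (\<delta> - 1) * t powr (2*a))
        = Beta (a+1/2) \<delta> / 2 * hyp1F2 a (a + 1/2 + \<delta>) (2*a) x"
      using raise_eq[OF a a2(1) a2(2) d, of x] unfolding pe .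
    moreover have "Beta (a+1/2) \<delta> > 0" by (rule Beta_pos[OF a2(1) d])
    ultimately show "hyp1F2 a (a + 1/2 + \<delta>) (2*a) x =
            2 / Beta \<delta> (a + 1/2) *
            (LBINT t=0..1. (nBesselJ (a - 1/2) (x*t/2))^2 * (1 - t^2) powr (\<delta> - 1) * t powr (2*a))"
      by (simp add: Beta_commute[of \<delta>] field_simps)
  }
  show "hyp1F2 a (a + 1/2 + \<delta>) (2*a) x > 0"
    using part1[OF a, of "a + 1/2 + \<delta>" "2*a" x] d by simp
  {
    have ex: "2 * (2*a) - 1 = 4*a - 1" by simp
    have pe: "hyp1F2 a (2*a) (a+1/2) (x*t) * (1-t^2) powr (\<delta>-1) * t powr (2 * (2*a) - 1)
            = (nBesselJ (a - 1/2) (x*t/2))^2 * (1 - t^2) powr (\<delta> - 1) * t powr (4*a - 1)" for t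
      unfolding ex hyp_sym[of a "2*a"] clausen[OF a] by (rule refl)
    have "(LBINT t=0..1. (nBesselJ (a - 1/2) (x*t/2))^2 * (1 - t^2) powr (\<delta> - 1) * t powr (4*a - 1))
        = Beta (2*a) \<delta> / 2 * hyp1F2 a (2*a + \<delta>) (a + 1/2) x"
      using raise_eq[OF a a2(2) a2(1) d, of x] unfolding pe .
    moreover have "Beta (2*a) \<delta> > 0" by (rule Beta_pos[OF a2(2) d])
    ultimately have "hyp1F2 a (2*a + \<delta>) (a + 1/2) x =
            2 / Beta \<delta> (2*a) *
            (LBINT t=0..1. (nBesselJ (a - 1/2) (x*t/2))^2 * (1 - t^2) powr (\<delta> - 1) * t powr (4*a - 1))"
      by (simp add: Beta_commute[of \<delta>] field_simps)
    moreover have "hyp1F2 a (a + 1/2) (2*a + \<delta>) x = hyp1F2 a (2*a + \<delta>) (a + 1/2) x" by (rule hyp_sym)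
    ultimately show "hyp1F2 a (a + 1/2) (2*a + \<delta>) x =
            2 / Beta \<delta> (2*a) *
            (LBINT t=0..1. (nBesselJ (a - 1/2) (x*t/2))^2 * (1 - t^2) powr (\<delta> - 1) * t powr (4*a - 1))"
      by simp
  }
  show "hyp1F2 a (a + 1/2) (2*a + \<delta>) x > 0"
    using part1[OF a, of "a + 1/2" "2*a + \<delta>" x] d by simp
qed


end
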